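(* The group $\mathbb{Z}^\omega$ is the union of a Haar null set and a Haar meager set.
   Context: $\mathbb{Z}^\omega$ is the abelian Polish group of all integer sequences with coordinatewise addition and the product topology (discrete topology on $\mathbb{Z}$). For an abelian Polish group $G$: a set $A\subseteq G$ is Haar null if there exist a Borel set $B\supseteq A$ and a Borel probability measure $\mu$ on $G$ with $\mu(x+B)=0$ for every $x\in G$; a set $A\subseteq G$ is Haar meager if there exist a Borel set $B\supseteq A$, a compact metric space $K$ and a continuous map $f\colon K\to G$ such that $f^{-1}(x+B)$ is meager in $K$ for every $x\in G$. *)

theory Defs
  imports "HOL-Analysis.Analysis" "HOL-Probability.Probability"
begin

text \<open>The group Z^omega: integer sequences, coordinatewise addition, product topology
  (the product of the discrete topology on int, which is the library's instance
  for the function type nat => int).\<close>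
type_synonym zw = "nat \<Rightarrow> int"

definition zw_translate :: "zw \<Rightarrow> zw set \<Rightarrow> zw set" where
  "zw_translate x B = (\<lambda>y. (\<lambda>n. x n + y n)) ` B"

definition nowhere_dense_in :: "'a topology \<Rightarrow> 'a set \<Rightarrow> bool" where
  "nowhere_dense_in X S \<longleftrightarrow> S \<subseteq> topspace X \<and> X interior_of (X closure_of S) = {}"

definition meager_in :: "'a topology \<Rightarrow> 'a set \<Rightarrow> bool" where
  "meager_in X S \<longleftrightarrow> S \<subseteq> topspace X \<and>
     (\<exists>F :: nat \<Rightarrow> 'a set. (\<forall>n. nowhere_dense_in X (F n)) \<and> S \<subseteq> (\<Union>n. F n))"

definition haar_null :: "zw set \<Rightarrow> bool" where
  "haar_null A \<longleftrightarrow> (\<exists>B \<in> sets (borel :: zw measure). A \<subseteq> B \<and>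
     (\<exists>\<mu> :: zw measure. sets \<mu> = sets borel \<and> prob_space \<mu> \<and>
        (\<forall>x. emeasure \<mu> (zw_translate x B) = 0)))"

text \<open>Compact metric spaces K are represented as compact subsets of the
  metrizable space nat => real with the product topology (every compact metric
  space embeds into the Hilbert cube [0,1]^omega).\<close>
definition haar_meager :: "zw set \<Rightarrow> bool" where
  "haar_meager A \<longleftrightarrow> (\<exists>B \<in> sets (borel :: zw measure). A \<subseteq> B \<and>
     (\<exists>(K :: (nat \<Rightarrow> real) set) (f :: (nat \<Rightarrow> real) \<Rightarrow> zw).
        K \<noteq> {} \<and> compact K \<and> continuous_on K f \<and>
        (\<forall>x. meager_in (top_of_set K) {k \<in> K. f k \<in> zw_translate x B})))"

end

theory Submission
  imports Defs
begin


definition Nn :: "nat \<Rightarrow> int" where "Nn n = 2 ^ Suc n"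
definition CC :: "zw \<Rightarrow> zw set" where
  "CC c = {z. \<forall>m. \<exists>n\<ge>m. Nn n dvd (z n - c n)}"

lemma translate_eq: "zw_translate x B = {z. (\<lambda>n. z n - x n) \<in> B}"
  unfolding zw_translate_def
proof (intro set_eqI iffI)
  fix z assume "z \<in> (\<lambda>y n. x n + y n) ` B"
  then show "z \<in> {z. (\<lambda>n. z n - x n) \<in> B}" by auto
next
  fix z assume "z \<in> {z. (\<lambda>n. z n - x n) \<in> B}"
  then have "(\<lambda>n. z n - x n) \<in> B" by simp
  then show "z \<in> (\<lambda>y n. x n + y n) ` B"
    by (intro image_eqI[where x="\<lambda>n. z n - x n"]) auto
qed

lemma translate_CC: "zw_translate x (CC (\<lambda>_. 0)) = CC x"
  by (auto simp: translate_eq CC_def)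

lemma translate_CC_compl: "zw_translate x (- CC (\<lambda>_. 0)) = - CC x"
  by (auto simp: translate_eq CC_def)

lemma coord_borel: "{z::zw. P (z n)} \<in> sets borel"
proof -
  have m: "(\<lambda>z::zw. z n) \<in> borel_measurable borel"
    by (rule measurable_product_then_coordinatewise) simp
  have "{a::int. P a} \<in> sets borel" by (rule borel_open) (rule discrete_topology_class.open_discrete)
  then have "(\<lambda>z::zw. z n) -` {a. P a} \<inter> space borel \<in> sets borel"
    using m by (rule measurable_sets[rotated])
  then show ?thesis by simp
qed

lemma CC_borel: "CC c \<in> sets borel"
proof -
  have "CC c = (\<Inter>m. \<Union>n\<in>{m..}. {z. Nn n dvd (z n - c n)})"
    by (auto simp: CC_def)
  also have "\<dots> \<in> sets borel"
    using coord_borel by (intro sets.countable_INT sets.countable_UN') auto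
  finally show ?thesis .
qed



instance int :: second_countable_topology
proof
  have "generate_topology (range (\<lambda>i::int. {i})) S" for S
  proof -
    have "generate_topology (range (\<lambda>i::int. {i})) (\<Union>i\<in>S. {i})"
      by (intro generate_topology.UN) (auto intro: generate_topology.Basis)
    then show ?thesis by simp
  qed
  moreover have "open (S::int set)" for S by (rule discrete_topology_class.open_discrete)
  ultimately have "open = generate_topology (range (\<lambda>i::int. {i}))"
    by (intro ext iffI) auto
  moreover have "countable (range (\<lambda>i::int. {i}))" by simp
  ultimately show "\<exists>B::int set set. countable B \<and> open = generate_topology B"
    by (intro exI[of _ "range (\<lambda>i::int. {i})"]) simp
qed

definition Mi :: "nat \<Rightarrow> int measure" where
  "Mi n = measure_pmf (pmf_of_set {0..<Nn n})"

definition PP :: "zw measure" where "PP = PiM UNIV Mi"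

lemma Nn_pos: "Nn n > 0" by (simp add: Nn_def)

lemma PP_prod: "product_prob_space Mi"
  unfolding product_prob_space_def product_sigma_finite_def product_prob_space_axioms_def
  by (auto simp: Mi_def prob_space_measure_pmf prob_space_imp_sigma_finite Nn_pos)

lemma prob_PP: "prob_space PP"
  unfolding PP_def by (rule prob_space_PiM) (auto simp: Mi_def prob_space_measure_pmf)

lemma id_meas: "(\<lambda>z. z) \<in> measurable PP borel"
proof (rule measurable_coordinatewise_then_product[where f="\<lambda>z. z"])
  fix i
  have "(\<lambda>z. z i) \<in> measurable PP (Mi i)"
    unfolding PP_def by (rule measurable_component_singleton) simp
  moreover have "sets (Mi i) = sets (borel :: int measure)"
    by (auto simp: Mi_def intro!: borel_open discrete_topology_class.open_discrete)
  ultimately show "(\<lambda>z. z i) \<in> borel_measurable PP"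
    using measurable_cong_sets by blast
qed

lemma card_le1: "card ({0..<Nn n} \<inter> {a. Nn n dvd (a - c)}) \<le> 1"
proof -
  have "{0..<Nn n} \<inter> {a. Nn n dvd (a - c)} \<subseteq> {c mod Nn n}"
  proof
    fix a assume a: "a \<in> {0..<Nn n} \<inter> {a. Nn n dvd (a - c)}"
    then have "Nn n dvd a - c" by simp
    then have "a mod Nn n = c mod Nn n" by (simp only: mod_eq_dvd_iff)
    moreover have "a mod Nn n = a" using a by (intro mod_pos_pos_trivial) auto
    ultimately show "a \<in> {c mod Nn n}" by simp
  qed
  then show ?thesis using card_mono[of "{c mod Nn n}"] by fastforce
qed

lemma coord_meas: "emeasure PP {z \<in> space PP. Nn n dvd (z n - c)} \<le> ennreal ((1/2) ^ Suc n)"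
proof -
  interpret product_prob_space Mi UNIV by (rule PP_prod)
  have "emeasure PP {z \<in> space PP. Nn n dvd (z n - c)} = emeasure PP {z \<in> space PP. z n \<in> {a. Nn n dvd (a - c)}}"
    by simp
  also have "\<dots> = emeasure (Mi n) {a. Nn n dvd (a - c)}"
    unfolding PP_def by (rule emeasure_PiM_Collect_single) (auto simp: Mi_def)
  also have "\<dots> = ennreal (measure (Mi n) {a. Nn n dvd (a - c)})"
    unfolding Mi_def by (rule measure_pmf.emeasure_eq_measure)
  also have "measure (Mi n) {a. Nn n dvd (a - c)} = card ({0..<Nn n} \<inter> {a. Nn n dvd (a - c)}) / card {0..<Nn n}"
    unfolding Mi_def by (rule measure_pmf_of_set) (auto simp: Nn_pos)
  also have "\<dots> \<le> 1 / card {0..<Nn n}"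
    using card_le1[of n c] by (intro divide_right_mono) auto
  also have "card {0..<Nn n} = (2::nat) ^ Suc n" unfolding Nn_def by (simp add: nat_power_eq del: power_Suc)
  also have "1 / real ((2::nat) ^ Suc n) = (1/2) ^ Suc n" by (simp add: power_one_over)
  finally show ?thesis by (simp add: ennreal_leI)
qed



lemma A_sets: "{z \<in> space PP. Nn n dvd (z n - c)} \<in> sets PP"
proof -
  have m: "(\<lambda>z. z n) \<in> measurable PP (Mi n)"
    unfolding PP_def by (rule measurable_component_singleton) simp
  have "(\<lambda>z. z n) -` {a. Nn n dvd (a - c)} \<inter> space PP \<in> sets PP"
    by (rule measurable_sets[OF m]) (simp add: Mi_def)
  moreover have "(\<lambda>z. z n) -` {a. Nn n dvd (a - c)} \<inter> space PP = {z \<in> space PP. Nn n dvd (z n - c)}"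
    by auto
  ultimately show ?thesis by simp
qed

lemma geom: "(\<Sum>j. ennreal ((1/2) ^ Suc (j + m))) = ennreal ((1/2) ^ m)"
proof -
  have eq: "(\<lambda>j. (1/2::real) ^ Suc (j + m)) = (\<lambda>j. (1/2) ^ j * (1/2)^Suc m)"
    by (intro ext) (metis add_Suc_right power_add)
  have s: "summable (\<lambda>j. (1/2::real) ^ Suc (j + m))"
    unfolding eq by (intro summable_mult2 summable_geometric) simp
  have "(\<Sum>j. (1/2::real) ^ Suc (j + m)) = (\<Sum>j. (1/2) ^ j * (1/2)^Suc m)"
    by (simp only: eq)
  also have "\<dots> = (\<Sum>j. (1/2::real) ^ j) * (1/2)^Suc m"
    by (rule suminf_mult2[symmetric]) simp
  also have "\<dots> = (1/2) ^ m" by (simp add: suminf_geometric)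
  finally show ?thesis using s by (simp add: suminf_ennreal2 del: power_Suc)
qed

lemma CC_null: "emeasure PP (CC c \<inter> space PP) = 0"
proof -
  have le: "emeasure PP (CC c \<inter> space PP) \<le> ennreal ((1/2) ^ m)" for m
  proof -
    let ?A = "\<lambda>j. {z \<in> space PP. Nn (j + m) dvd (z (j + m) - c (j + m))}"
    have "CC c \<inter> space PP \<subseteq> (\<Union>j. ?A j)"
    proof
      fix z assume z: "z \<in> CC c \<inter> space PP"
      then obtain n where "n \<ge> m" "Nn n dvd (z n - c n)" unfolding CC_def by blast
      then have "z \<in> ?A (n - m)" using z by auto
      then show "z \<in> (\<Union>j. ?A j)" by blast
    qed
    then have "emeasure PP (CC c \<inter> space PP) \<le> emeasure PP (\<Union>j. ?A j)"
      by (intro emeasure_mono) (auto intro!: sets.countable_UN A_sets)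
    also have "\<dots> \<le> (\<Sum>j. emeasure PP (?A j))"
      by (rule emeasure_subadditive_countably) (auto intro!: A_sets)
    also have "\<dots> \<le> (\<Sum>j. ennreal ((1/2) ^ Suc (j + m)))"
      by (intro suminf_le coord_meas) auto
    also have "\<dots> = ennreal ((1/2) ^ m)" by (rule geom)
    finally show ?thesis .
  qed
  have t: "(\<lambda>m. ennreal ((1/2::real) ^ m)) \<longlonglongrightarrow> 0"
    using tendsto_ennrealI[OF LIMSEQ_power_zero[of "1/2::real"]] by simp
  have "emeasure PP (CC c \<inter> space PP) \<le> 0"
    by (rule LIMSEQ_le_const[OF t]) (use le in auto)
  then show ?thesis by simp
qed

lemma null_part: "haar_null (CC (\<lambda>_. 0))"
  unfolding haar_null_def
proof (intro bexI[of _ "CC (\<lambda>_. 0)"] conjI exI[of _ "distr PP borel (\<lambda>z. z)"] allI)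
  show "CC (\<lambda>_. 0) \<in> sets borel" by (rule CC_borel)
  show "sets (distr PP borel (\<lambda>z. z)) = sets borel" by simp
  show "prob_space (distr PP borel (\<lambda>z. z))"
    by (rule prob_space.prob_space_distr[OF prob_PP id_meas])
  fix x
  have "emeasure (distr PP borel (\<lambda>z. z)) (zw_translate x (CC (\<lambda>_. 0)))
      = emeasure (distr PP borel (\<lambda>z. z)) (CC x)" by (simp add: translate_CC)
  also have "\<dots> = emeasure PP ((\<lambda>z. z) -` CC x \<inter> space PP)"
    by (rule emeasure_distr[OF id_meas CC_borel])
  also have "\<dots> = 0" using CC_null by simp
  finally show "emeasure (distr PP borel (\<lambda>z. z)) (zw_translate x (CC (\<lambda>_. 0))) = 0" .
qed simp



definition KK :: "(nat \<Rightarrow> real) set" where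
  "KK = PiE UNIV (\<lambda>n. real_of_int ` {0..<Nn n})"

definition ff :: "(nat \<Rightarrow> real) \<Rightarrow> zw" where
  "ff k = (\<lambda>n. floor (k n))"

lemma Nn_pos': "Nn n > 0" by (simp add: Nn_def)

lemma KK_ne: "KK \<noteq> {}"
proof -
  have "(\<lambda>n. 0) \<in> KK" unfolding KK_def using Nn_pos' by (auto intro: image_eqI[where x=0])
  then show ?thesis by blast
qed

lemma KK_compact: "compact KK"
proof -
  have "compactin (product_topology (\<lambda>i. euclidean) UNIV) KK"
    unfolding KK_def by (subst compactin_PiE) (auto intro: finite_imp_compact)
  then show ?thesis by (simp add: euclidean_product_topology)
qed

lemma ff_cont: "continuous_on KK ff"
  unfolding ff_def
proof (rule continuous_on_coordinatewise_then_product)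
  fix n
  have "continuous_on (real_of_int ` {0..<Nn n}) floor"
    by (rule continuous_on_finite) simp
  moreover have "continuous_on KK (\<lambda>k. k n)"
    by (rule continuous_on_product_then_coordinatewise[OF continuous_on_id])
  moreover have "(\<lambda>k. k n) ` KK \<subseteq> real_of_int ` {0..<Nn n}"
    unfolding KK_def by auto
  ultimately show "continuous_on KK (\<lambda>k. floor (k n))"
    by (rule continuous_on_compose2)
qed

definition FF :: "zw \<Rightarrow> nat \<Rightarrow> (nat \<Rightarrow> real) set" where
  "FF x m = {k \<in> KK. \<forall>n\<ge>m. \<not> Nn n dvd (floor (k n) - x n)}"

lemma FF_closed: "closedin (top_of_set KK) (FF x m)"
proof -
  have "FF x m = (\<Inter>n\<in>{m..}. KK \<inter> (\<lambda>k. floor (k n)) -` {a. \<not> Nn n dvd (a - x n)})"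
    unfolding FF_def by auto
  also have "closedin (top_of_set KK) \<dots>"
  proof (rule closedin_INT)
    show "{m..} \<noteq> {}" by auto
    fix n
    have "continuous_on KK (\<lambda>k. floor (k n))"
      using continuous_on_product_then_coordinatewise[OF ff_cont, of n] by (simp add: ff_def)
    moreover have "closed {a::int. \<not> Nn n dvd (a - x n)}"
      unfolding closed_def by (rule discrete_topology_class.open_discrete)
    ultimately show "closedin (top_of_set KK) (KK \<inter> (\<lambda>k. floor (k n)) -` {a. \<not> Nn n dvd (a - x n)})"
      by (rule continuous_closedin_preimage)
  qed
  finally show ?thesis .
qed

lemma FF_interior: "top_of_set KK interior_of (FF x m) = {}"
proof (rule ccontr)
  assume "top_of_set KK interior_of (FF x m) \<noteq> {}"
  then obtain k T where T: "openin (top_of_set KK) T" "k \<in> T" "T \<subseteq> FF x m"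
    unfolding interior_of_def by blast
  obtain V where V: "open V" "T = KK \<inter> V" using T(1) by (auto simp: openin_open)
  have kK: "k \<in> KK" using T V by auto
  define g where "g j = k(j := real_of_int (x j mod Nn j))" for j
  have gK: "g j \<in> KK" for j
  proof -
    have "x j mod Nn j \<in> {0..<Nn j}" using Nn_pos'[of j] by simp
    then show ?thesis using kK unfolding g_def KK_def by (auto simp: PiE_iff)
  qed
  have "limitin (product_topology (\<lambda>i. euclidean) UNIV) g k sequentially"
    unfolding limitin_componentwise
  proof (intro conjI ballI)
    fix i
    have "eventually (\<lambda>j. g j i = k i) sequentially"
      unfolding eventually_sequentially g_def by (intro exI[of _ "Suc i"]) auto
    then have "((\<lambda>j. g j i) \<longlongrightarrow> k i) sequentially" by (rule tendsto_eventually)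
    then show "limitin euclidean (\<lambda>c. g c i) (k i) sequentially" by simp
  qed auto
  then have "(g \<longlongrightarrow> k) sequentially" by (simp add: euclidean_product_topology)
  then have "eventually (\<lambda>j. g j \<in> V) sequentially"
    using V(1) T(2) V(2) by (intro topological_tendstoD) auto
  then obtain N where N: "\<And>j. j \<ge> N \<Longrightarrow> g j \<in> V" unfolding eventually_sequentially by blast
  define j where "j = max N m"
  have "g j \<in> T" using N[of j] gK[of j] V(2) by (simp add: j_def)
  then have "g j \<in> FF x m" using T(3) by blast
  then have "\<not> Nn j dvd (floor (g j j) - x j)" unfolding FF_def j_def by auto
  moreover have "floor (g j j) = x j mod Nn j" by (simp add: g_def)
  moreover have "(x j mod Nn j) mod Nn j = x j mod Nn j" by simp
  then have "Nn j dvd (x j mod Nn j - x j)" by (simp only: mod_eq_dvd_iff)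
  ultimately show False by simp
qed

lemma meager_part: "haar_meager (- CC (\<lambda>_. 0))"
  unfolding haar_meager_def
proof (intro bexI[of _ "- CC (\<lambda>_. 0)"] conjI exI[of _ KK] exI[of _ ff] allI)
  have "UNIV - CC (\<lambda>_. 0) \<in> sets (borel :: zw measure)"
    using sets.compl_sets[OF CC_borel] by simp
  then show "- CC (\<lambda>_. 0) \<in> sets (borel :: zw measure)" by (simp add: Compl_eq_Diff_UNIV)
  show "KK \<noteq> {}" by (rule KK_ne)
  show "compact KK" by (rule KK_compact)
  show "continuous_on KK ff" by (rule ff_cont)
  fix x
  show "meager_in (top_of_set KK) {k \<in> KK. ff k \<in> zw_translate x (- CC (\<lambda>_. 0))}"
    unfolding meager_in_def
  proof (intro conjI exI[of _ "FF x"] allI)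
    show "{k \<in> KK. ff k \<in> zw_translate x (- CC (\<lambda>_. 0))} \<subseteq> topspace (top_of_set KK)" by auto
    fix m
    show "nowhere_dense_in (top_of_set KK) (FF x m)"
      unfolding nowhere_dense_in_def
      using closure_of_closedin[OF FF_closed] FF_interior by (auto simp: FF_def)
  next
    show "{k \<in> KK. ff k \<in> zw_translate x (- CC (\<lambda>_. 0))} \<subseteq> (\<Union>m. FF x m)"
      unfolding translate_CC_compl by (auto simp: CC_def FF_def ff_def)
  qed
qed simp


theorem mainTheorem14:
  shows "\<exists>N M :: zw set. N \<union> M = UNIV \<and> haar_null N \<and> haar_meager M"
  using null_part meager_part by blast

end
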